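(* For every $k\in\omega\setminus\{0\}$, $h^d(T_k)\ge k-1$, where $h$ is the depth.
   Context: Notation: $\omega=\{0,1,2,\dots\}$; $\mathcal P(\omega)$ is the set of nonempty finite subsets of $\omega$; $E_2=\{0,1\}$. $P=\{f_i:i\in\omega\}$ is a set of attributes. Decision tables: $\mathcal M_2^\infty$ is the set of rectangular tables filled with numbers from $E_2$, whose columns are labeled with pairwise different attributes from $P$, whose rows are pairwise different, and each row of which is labeled with a set from $\mathcal P(\omega)$ (its set of decisions). The empty table is denoted $\Lambda$. For $T\in\mathcal M_2^\infty$: $\Pi(T)$ is the intersection of the decision sets of all rows (common decisions); $\mathrm{At}(T)$ is the set of attributes labeling columns. For nonempty $T$ and a word $\alpha=(f_{i_1},\delta_1)\cdots(f_{i_m},\delta_m)$ with $f_{i_j}\in\mathrm{At}(T)$, $\delta_j\in E_2$, $T\alpha$ is the subtable consisting of the rows having value $\delta_j$ in column $f_{i_j}$ for all $j$; $T\lambda=T$ for the empty word $\lambda$. Decision trees: a $2$-decision tree is a finite directed rooted tree with at least two nodes in which the root and the edges leaving the root are unlabeled, each terminal node is labeled with a decision from $\omega$, and each other node is labeled with an attribute from $P$, each edge leaving such a node being labeled with a number from $E_2$. $\mathrm{At}(\Gamma)$ is the set of attributes labeling nodes of $\Gamma$. For a complete path $\tau=v_1,d_1,\dots,v_m,d_m,v_{m+1}$ (from the root to a terminal node), $\pi(\tau)=\lambda$ if $m=1$, and otherwise $\pi(\tau)=(f_{i_2},\delta_2)\cdots(f_{i_m},\delta_m)$ where $v_j$ is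 labeled $f_{i_j}$ and $d_j$ is labeled $\delta_j$; $T(\tau)=T\pi(\tau)$. For $T\ne\Lambda$, a deterministic decision tree for $T$ is a $2$-decision tree $\Gamma$ with $\mathrm{At}(\Gamma)\subseteq\mathrm{At}(T)$ in which exactly one edge leaves the root, edges leaving any node that is neither the root nor terminal are labeled with pairwise different numbers, every row of $T$ belongs to $T(\tau)$ for some complete path $\tau$, and for every complete path $\tau$ either $T(\tau)=\Lambda$ or the decision at the terminal node of $\tau$ belongs to $\Pi(T(\tau))$. The depth of $\Gamma$ is $h(\Gamma)=\max_\tau|\pi(\tau)|$; $h^d(T)$ is the minimum depth of a deterministic decision tree for $T$. The graph $G_k$ and table $T_k$ ($k\ge1$): $G_k$ is a directed graph whose nodes are arranged in $k$ layers, layer $s$ ($1\le s\le k$) containing $s$ nodes; the nodes are numbered $1,\dots,m(k)$, $m(k)=k(k+1)/2$, layer by layer from the top and from left to right within a layer (so the $j$th node of layer $s$ has number $s(s-1)/2+j$). For a node $i$ that is the $j$th node of layer $s<k$, its left child $l(i)$ is the $j$th node of layer $s+1$ and its right child $p(i)$ is the $(j+1)$th node of layer $s+1$; the edges of $G_k$ go from each node to its two children. Define $\nu_k:E_2^{m(k)}\to\mathcal P(\omega)$: for $\bar\delta=(\delta_1,\dots,\delta_{m(k)})$, $\nu_k(\bar\delta)\subseteq\{0,1,\dots,m(k)\}$, where $0\in\nu_k(\bar\delta)$ iff $\delta_1=0$; for a node $i$ not in layer $k$, $i\in\nu_k(\bar\delta)$ iff $\delta_i=1$ and $\delta_{l(i)}=\delta_{p(i)}=0$;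 for a node $i$ in layer $k$, $i\in\nu_k(\bar\delta)$ iff $\delta_i=1$. $T_k\in\mathcal M_2^\infty$ is the table with $m(k)$ columns labeled $f_1,\dots,f_{m(k)}$ (column $f_i$ corresponding to node $i$), whose rows are all $2^{m(k)}$ tuples of $E_2^{m(k)}$, each row $\bar\delta$ labeled with $\nu_k(\bar\delta)$. *)

theory Defs
  imports Main
begin

text \<open>Attribute f_i is represented by the natural number i; E_2 = {0,1} as naturals.
A row is a function nat => nat (value at attribute i; irrelevant outside the columns,
fixed to 0 there for the tables considered).\<close>

datatype table = Table (tatt: "nat set") (trows: "(nat \<Rightarrow> nat) set")
                       (tdec: "(nat \<Rightarrow> nat) \<Rightarrow> nat set")

definition sub :: "table \<Rightarrow> (nat \<times> nat) list \<Rightarrow> table" where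
  "sub T \<alpha> = Table (tatt T) {r \<in> trows T. \<forall>(f, v) \<in> set \<alpha>. r f = v} (tdec T)"

definition Pi_dec :: "table \<Rightarrow> nat set" where
  "Pi_dec T = (\<Inter>r \<in> trows T. tdec T r)"

text \<open>Decision trees below the (unlabelled) root: the unique child of the root is the
argument. A terminal node carries a decision; a working node carries an attribute and
optionally an edge labelled 0 and an edge labelled 1 (so outgoing edge labels are
pairwise different).\<close>
datatype dtree = Leaf nat | Node nat "dtree option" "dtree option"

fun wf_tree :: "dtree \<Rightarrow> bool" where
  "wf_tree (Leaf d) = True"
| "wf_tree (Node f l r) =
     ((l \<noteq> None \<or> r \<noteq> None) \<and> (\<forall>t. l = Some t \<longrightarrow> wf_tree t) \<and> (\<forall>t. r = Some t \<longrightarrow> wf_tree t))"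

fun tree_atts :: "dtree \<Rightarrow> nat set" where
  "tree_atts (Leaf d) = {}"
| "tree_atts (Node f l r) = {f} \<union> (case l of None \<Rightarrow> {} | Some t \<Rightarrow> tree_atts t)
                               \<union> (case r of None \<Rightarrow> {} | Some t \<Rightarrow> tree_atts t)"

fun paths :: "dtree \<Rightarrow> ((nat \<times> nat) list \<times> nat) set" where
  "paths (Leaf d) = {([], d)}"
| "paths (Node f l r) =
     (case l of None \<Rightarrow> {} | Some t \<Rightarrow> (\<lambda>(p, d). ((f, 0) # p, d)) ` paths t)
   \<union> (case r of None \<Rightarrow> {} | Some t \<Rightarrow> (\<lambda>(p, d). ((f, 1) # p, d)) ` paths t)"

definition depth :: "dtree \<Rightarrow> nat" where
  "depth \<Gamma> = Max ((\<lambda>(p, d). length p) ` paths \<Gamma>)"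

definition det_tree :: "table \<Rightarrow> dtree \<Rightarrow> bool" where
  "det_tree T \<Gamma> \<longleftrightarrow>
     wf_tree \<Gamma> \<and> tree_atts \<Gamma> \<subseteq> tatt T
   \<and> (\<forall>r \<in> trows T. \<exists>(p, d) \<in> paths \<Gamma>. r \<in> trows (sub T p))
   \<and> (\<forall>(p, d) \<in> paths \<Gamma>. trows (sub T p) = {} \<or> d \<in> Pi_dec (sub T p))"

definition h_det :: "table \<Rightarrow> nat" where
  "h_det T = (LEAST n. \<exists>\<Gamma>. det_tree T \<Gamma> \<and> depth \<Gamma> = n)"

text \<open>The graph G_k and table T_k. Node j of layer s has number idx s j.\<close>
definition m :: "nat \<Rightarrow> nat" where "m k = k * (k + 1) div 2"

definition idx :: "nat \<Rightarrow> nat \<Rightarrow> nat" where "idx s j = s * (s - 1) div 2 + j"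

definition nu :: "nat \<Rightarrow> (nat \<Rightarrow> nat) \<Rightarrow> nat set" where
  "nu k \<delta> =
     {0 | _::unit. \<delta> 1 = 0}
   \<union> {idx s j | s j. 1 \<le> s \<and> s < k \<and> 1 \<le> j \<and> j \<le> s \<and> \<delta> (idx s j) = 1
                 \<and> \<delta> (idx (s + 1) j) = 0 \<and> \<delta> (idx (s + 1) (j + 1)) = 0}
   \<union> {idx k j | j. 1 \<le> j \<and> j \<le> k \<and> \<delta> (idx k j) = 1}"

definition Tk :: "nat \<Rightarrow> table" where
  "Tk k = Table {1..m k}
     {r. (\<forall>i \<in> {1..m k}. r i \<in> {0, 1}) \<and> (\<forall>i. i \<notin> {1..m k} \<longrightarrow> r i = 0)}
     (nu k)"

end

theory Submission
  imports Defs
begin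


lemma tri_step: "(s::nat) \<ge> 1 \<Longrightarrow> s * (s - 1) div 2 + s = s * (s + 1) div 2"
proof -
  assume "s \<ge> 1"
  then obtain n where s: "s = Suc n" by (cases s) auto
  have "Suc n * (Suc n + 1) = Suc n * n + 2 * Suc n" by (simp add: algebra_simps)
  then show ?thesis using s by simp
qed

lemma tri_mono: "(a::nat) \<le> b \<Longrightarrow> a * (a - 1) div 2 \<le> b * (b - 1) div 2"
  by (intro div_le_mono mult_le_mono) auto

lemma idx_bounds:
  assumes "1 \<le> j" "j \<le> s"
  shows "s * (s - 1) div 2 < idx s j" "idx s j \<le> s * (s + 1) div 2"
  using assms tri_step[of s] by (auto simp: idx_def)

lemma idx_less:
  assumes "1 \<le> j" "j \<le> s" "1 \<le> j'" "j' \<le> s'" "s < s'"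
  shows "idx s j < idx s' j'"
proof -
  have "idx s j \<le> s * (s + 1) div 2" using idx_bounds assms by auto
  also have "\<dots> = (s+1) * ((s+1) - 1) div 2" by (simp add: mult.commute)
  also have "\<dots> \<le> s' * (s' - 1) div 2" using assms by (intro tri_mono) auto
  also have "\<dots> < idx s' j'" using idx_bounds assms by auto
  finally show ?thesis .
qed

lemma idx_inj:
  assumes "1 \<le> j" "j \<le> s" "1 \<le> j'" "j' \<le> s'" "idx s j = idx s' j'"
  shows "s = s' \<and> j = j'"
proof -
  have "s = s'"
  proof (rule ccontr)
    assume "s \<noteq> s'"
    then have "s < s' \<or> s' < s" by auto
    then show False using idx_less[of j s j' s'] idx_less[of j' s' j s] assms by auto
  qed
  then show ?thesis using assms by (simp add: idx_def)
qed

lemma idx_range: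
  assumes "1 \<le> j" "j \<le> s" "s \<le> k"
  shows "idx s j \<in> {1..m k}"
proof -
  have "idx s j \<le> s * (s + 1) div 2" using idx_bounds assms by auto
  also have "\<dots> \<le> k * (k+1) div 2" using assms by (intro div_le_mono mult_le_mono) auto
  finally show ?thesis using assms by (auto simp: idx_def m_def)
qed



definition isp :: "nat \<Rightarrow> (nat \<Rightarrow> nat) \<Rightarrow> bool" where
  "isp k p \<longleftrightarrow> p 1 = 1 \<and> (\<forall>s. 1 \<le> s \<and> s < k \<longrightarrow> p (Suc s) = p s \<or> p (Suc s) = Suc (p s))"

definition nodes :: "nat \<Rightarrow> (nat \<Rightarrow> nat) \<Rightarrow> nat set" where
  "nodes k p = {idx s (p s) | s. 1 \<le> s \<and> s \<le> k}"

definition row :: "nat set \<Rightarrow> nat \<Rightarrow> nat" where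
  "row S = (\<lambda>i. if i \<in> S then 1 else 0)"

lemma isp_bounds: "isp k p \<Longrightarrow> 1 \<le> s \<Longrightarrow> s \<le> k \<Longrightarrow> 1 \<le> p s \<and> p s \<le> s"
proof (induction s)
  case 0 then show ?case by simp
next
  case (Suc s)
  show ?case
  proof (cases "s = 0")
    case True then show ?thesis using Suc.prems by (simp add: isp_def)
  next
    case False
    then have "1 \<le> p s \<and> p s \<le> s" using Suc by auto
    moreover have "p (Suc s) = p s \<or> p (Suc s) = Suc (p s)" using Suc.prems False by (auto simp: isp_def)
    ultimately show ?thesis by auto
  qed
qed

lemma nodes_range: "isp k p \<Longrightarrow> nodes k p \<subseteq> {1..m k}"
  using isp_bounds idx_range unfolding nodes_def by blast

lemma row_in_Tk: "S \<subseteq> {1..m k} \<Longrightarrow> row S \<in> trows (Tk k)"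
  unfolding Tk_def row_def by auto

lemma in_nodes_iff:
  assumes "isp k p" "1 \<le> j" "j \<le> s" "s \<le> k"
  shows "idx s j \<in> nodes k p \<longleftrightarrow> j = p s"
proof
  assume "idx s j \<in> nodes k p"
  then obtain s' where s': "1 \<le> s'" "s' \<le> k" "idx s j = idx s' (p s')" unfolding nodes_def by auto
  then have "1 \<le> p s' \<and> p s' \<le> s'" using isp_bounds assms by auto
  then show "j = p s" using idx_inj[of j s "p s'" s'] s' assms by auto
next
  assume "j = p s"
  then show "idx s j \<in> nodes k p" using assms unfolding nodes_def by auto
qed

lemma nu_row_path:
  assumes "isp k p" "k \<ge> 1"
  shows "nu k (row (nodes k p)) \<subseteq> {idx k (p k)}"
proof
  fix d assume d: "d \<in> nu k (row (nodes k p))"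
  have one: "idx 1 1 \<in> nodes k p" using in_nodes_iff[of k p 1 1] assms by (simp add: isp_def)
  have i11: "idx 1 1 = 1" by (simp add: idx_def)
  show "d \<in> {idx k (p k)}"
  proof -
    have A1: False if "row (nodes k p) 1 = 0" using that one i11 by (simp add: row_def)
    { fix s j assume h: "1 \<le> s" "s < k" "1 \<le> j" "j \<le> s" "row (nodes k p) (idx s j) = 1"
        "row (nodes k p) (idx (s + 1) j) = 0" "row (nodes k p) (idx (s + 1) (j + 1)) = 0"
      have "idx s j \<in> nodes k p" using h(5) by (simp add: row_def split: if_splits)
      then have js: "j = p s" using h in_nodes_iff[OF assms(1), of j s] by simp
      have st: "p (Suc s) = p s \<or> p (Suc s) = Suc (p s)" using h assms by (auto simp: isp_def)
      have b: "1 \<le> p (s+1) \<and> p (s+1) \<le> s+1" using h isp_bounds[OF assms(1), of "s+1"] by simp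
      have "idx (s+1) (p (s+1)) \<in> nodes k p"
        using h b in_nodes_iff[OF assms(1), of "p (s+1)" "s+1"] by simp
      then have r1: "row (nodes k p) (idx (s+1) (p (s+1))) = 1" by (simp add: row_def)
      have "p (s+1) = j \<or> p (s+1) = j+1" using st js by simp
      then have False
      proof
        assume "p (s+1) = j"
        then have "row (nodes k p) (idx (s+1) j) = 1" using r1 by metis
        then show False using h(6) by linarith
      next
        assume "p (s+1) = j+1"
        then have "row (nodes k p) (idx (s+1) (j+1)) = 1" using r1 by metis
        then show False using h(7) by linarith
      qed
    } note A2 = this
    { fix j assume h: "1 \<le> j" "j \<le> k" "row (nodes k p) (idx k j) = 1"
      have "idx k j \<in> nodes k p" using h(3) by (simp add: row_def split: if_splits)
      then have "j = p k" using h in_nodes_iff[OF assms(1), of j k] by simp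
      then have "idx k j = idx k (p k)" by simp } note A3 = this
    have D: "(d = 0 \<and> row (nodes k p) 1 = 0) \<or> (\<exists>s j. d = idx s j \<and> 1 \<le> s \<and> s < k \<and> 1 \<le> j \<and> j \<le> s \<and> row (nodes k p) (idx s j) = 1
        \<and> row (nodes k p) (idx (s + 1) j) = 0 \<and> row (nodes k p) (idx (s + 1) (j + 1)) = 0)
      \<or> (\<exists>j. d = idx k j \<and> 1 \<le> j \<and> j \<le> k \<and> row (nodes k p) (idx k j) = 1)"
      using d unfolding nu_def Un_iff mem_Collect_eq by blast
    from D show ?thesis
    proof (elim disjE exE conjE)
      assume "row (nodes k p) 1 = 0" then show ?thesis using A1 by blast
    next
      fix s j assume "d = idx s j" "1 \<le> s" "s < k" "1 \<le> j" "j \<le> s" "row (nodes k p) (idx s j) = 1"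
        "row (nodes k p) (idx (s + 1) j) = 0" "row (nodes k p) (idx (s + 1) (j + 1)) = 0"
      then show ?thesis using A2 by blast
    next
      fix j assume "d = idx k j" "1 \<le> j" "j \<le> k" "row (nodes k p) (idx k j) = 1"
      then show ?thesis using A3 by blast
    qed
  qed
qed

lemma nu_row_path_del:
  assumes "isp k p" "k \<ge> 2"
  shows "idx k (p k) \<notin> nu k (row (nodes k p - {idx k (p k)}))"
proof
  let ?b = "idx k (p k)"
  assume d: "?b \<in> nu k (row (nodes k p - {?b}))"
  have pk: "1 \<le> p k \<and> p k \<le> k" using isp_bounds assms by auto
  have b0: "?b \<noteq> 0" using pk by (simp add: idx_def)
  { fix s j assume h: "1 \<le> s" "s < k" "1 \<le> j" "j \<le> s" "?b = idx s j"
    then have False using idx_inj[of "p k" k j s] pk by auto }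
  moreover
  { fix j assume h: "1 \<le> j" "j \<le> k" "row (nodes k p - {?b}) (idx k j) = 1" "?b = idx k j"
    then have False by (auto simp: row_def) }
  moreover have "(?b = 0) \<or> (\<exists>s j. ?b = idx s j \<and> 1 \<le> s \<and> s < k \<and> 1 \<le> j \<and> j \<le> s)
      \<or> (\<exists>j. ?b = idx k j \<and> 1 \<le> j \<and> j \<le> k \<and> row (nodes k p - {?b}) (idx k j) = 1)"
      using d unfolding nu_def Un_iff mem_Collect_eq by blast
  ultimately show False using b0 by blast
qed



lemma count_lemma:
  assumes p: "isp k p" and k: "k \<ge> 1" and av: "nodes k p \<inter> Z = {}" and fin: "finite Z"
    and all: "\<And>q. isp k q \<Longrightarrow> nodes k q \<inter> Z = {} \<Longrightarrow> q k = p k"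
  shows "k - 1 \<le> card Z"
proof -
  define Z' where "Z' = {(s, c). 1 \<le> c \<and> c \<le> s \<and> s \<le> k \<and> idx s c \<in> Z}"
  define \<phi> where "\<phi> = (\<lambda>(s, c). if c < p s then c else c + k - s)"
  have finZ': "finite Z'" by (rule finite_subset[of _ "{0..k} \<times> {0..k}"]) (auto simp: Z'_def)
  have "card Z' \<le> card Z"
  proof (rule card_inj_on_le[of "case_prod idx"])
    show "inj_on (case_prod idx) Z'" unfolding Z'_def inj_on_def using idx_inj by auto
    show "case_prod idx ` Z' \<subseteq> Z" unfolding Z'_def by auto
  qed (rule fin)
  have pk: "1 \<le> p k \<and> p k \<le> k" using isp_bounds p k by auto
  have sub: "{1..k} - {p k} \<subseteq> \<phi> ` Z'"
  proof
    fix j assume j: "j \<in> {1..k} - {p k}"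
    define q where "q = (\<lambda>s. if j < p k then min (p s) j else max (p s) (j + s - k))"
    have step: "p (Suc s) = p s \<or> p (Suc s) = Suc (p s)" if "1 \<le> s" "s < k" for s
      using p that by (auto simp: isp_def)
    have q: "isp k q"
      unfolding isp_def
    proof (intro conjI allI impI)
      show "q 1 = 1" using p j by (auto simp: q_def isp_def)
      fix s assume s: "1 \<le> s \<and> s < k"
      show "q (Suc s) = q s \<or> q (Suc s) = Suc (q s)"
        using step[of s] s unfolding q_def by (cases "j < p k") auto
    qed
    have qk: "q k = j" using j pk by (auto simp: q_def)
    then have "q k \<noteq> p k" using j by auto
    then have "nodes k q \<inter> Z \<noteq> {}" using all q by blast
    then obtain s where s: "1 \<le> s" "s \<le> k" "idx s (q s) \<in> Z" unfolding nodes_def by blast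
    have qs: "1 \<le> q s \<and> q s \<le> s" using isp_bounds q s by auto
    have "q s \<noteq> p s"
    proof
      assume "q s = p s"
      then have "idx s (q s) \<in> nodes k p" unfolding nodes_def using s by auto
      then show False using av s by auto
    qed
    then have "\<phi> (s, q s) = j" using pk j qs unfolding \<phi>_def q_def by (auto split: if_splits)
    moreover have "(s, q s) \<in> Z'" using s qs unfolding Z'_def by auto
    ultimately show "j \<in> \<phi> ` Z'" by force
  qed
  have "k - 1 = card ({1..k} - {p k})" using pk by simp
  also have "\<dots> \<le> card (\<phi> ` Z')" using sub finZ' by (intro card_mono) auto
  also have "\<dots> \<le> card Z'" by (rule card_image_le[OF finZ'])
  also have "\<dots> \<le> card Z" by fact
  finally show ?thesis .
qed



definition Zs :: "(nat \<times> nat) list \<Rightarrow> nat set" where "Zs \<alpha> = {f. (f, 0) \<in> set \<alpha>}"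
definition Os :: "(nat \<times> nat) list \<Rightarrow> nat set" where "Os \<alpha> = {f. (f, 1) \<in> set \<alpha>}"

definition Inv :: "nat \<Rightarrow> (nat \<times> nat) list \<Rightarrow> bool" where
  "Inv k \<alpha> \<longleftrightarrow> (\<forall>(f, v) \<in> set \<alpha>. v = 0 \<or> v = 1)
     \<and> (\<exists>p. isp k p \<and> nodes k p \<inter> Zs \<alpha> = {})
     \<and> (\<forall>p. isp k p \<and> nodes k p \<inter> Zs \<alpha> = {} \<longrightarrow> Os \<alpha> \<subseteq> nodes k p)"

lemma Zs_card: "finite (Zs \<alpha>) \<and> card (Zs \<alpha>) \<le> length \<alpha>"
proof -
  have s: "Zs \<alpha> \<subseteq> fst ` set \<alpha>" unfolding Zs_def by force
  have "card (Zs \<alpha>) \<le> card (fst ` set \<alpha>)" by (rule card_mono[OF _ s]) auto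
  also have "\<dots> \<le> card (set \<alpha>)" by (rule card_image_le) auto
  also have "\<dots> \<le> length \<alpha>" by (rule card_length)
  finally show ?thesis using finite_subset[OF s] by auto
qed

lemma Inv_step: "Inv k \<alpha> \<Longrightarrow> \<exists>v. (v = 0 \<or> v = 1) \<and> Inv k (\<alpha> @ [(f, v)])"
proof -
  assume I: "Inv k \<alpha>"
  show ?thesis
  proof (cases "\<exists>p. isp k p \<and> nodes k p \<inter> (Zs \<alpha> \<union> {f}) = {}")
    case True
    have "Zs (\<alpha> @ [(f, 0)]) = Zs \<alpha> \<union> {f}" "Os (\<alpha> @ [(f, 0)]) = Os \<alpha>"
      unfolding Zs_def Os_def by auto
    then have "Inv k (\<alpha> @ [(f, 0)])" using I True unfolding Inv_def by auto
    then show ?thesis by blast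
  next
    case False
    have e: "Zs (\<alpha> @ [(f, 1)]) = Zs \<alpha>" "Os (\<alpha> @ [(f, 1)]) = Os \<alpha> \<union> {f}"
      unfolding Zs_def Os_def by auto
    have "\<forall>p. isp k p \<and> nodes k p \<inter> Zs \<alpha> = {} \<longrightarrow> f \<in> nodes k p"
      using False by blast
    then have "Inv k (\<alpha> @ [(f, 1)])" using I unfolding Inv_def e by auto
    then show ?thesis by blast
  qed
qed

lemma sub_rows: "trows (sub T \<alpha>) = {r \<in> trows T. \<forall>(f, v) \<in> set \<alpha>. r f = v}"
  by (simp add: sub_def)

lemma Inv_rows:
  assumes I: "Inv k \<alpha>" and k: "k \<ge> 1"
  shows "trows (sub (Tk k) \<alpha>) \<noteq> {}"
proof -
  obtain p where p: "isp k p" "nodes k p \<inter> Zs \<alpha> = {}" "Os \<alpha> \<subseteq> nodes k p" using I unfolding Inv_def by blast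
  have "row (nodes k p) \<in> trows (sub (Tk k) \<alpha>)"
    unfolding sub_rows
  proof (intro CollectI conjI ballI)
    show "row (nodes k p) \<in> trows (Tk k)" using row_in_Tk nodes_range p by blast
    fix x assume x: "x \<in> set \<alpha>"
    obtain f v where fv: "x = (f, v)" by force
    have "v = 0 \<or> v = 1" using I x fv unfolding Inv_def by auto
    then show "case x of (f, v) \<Rightarrow> row (nodes k p) f = v"
      using p x fv unfolding Zs_def Os_def row_def by auto
  qed
  then show ?thesis by blast
qed

lemma Inv_leaf:
  assumes I: "Inv k \<alpha>" and len: "length \<alpha> + 2 \<le> k"
  shows "\<exists>r \<in> trows (sub (Tk k) \<alpha>). d \<notin> nu k r"
proof -
  have k: "k \<ge> 2" using len by simp
  obtain p where p: "isp k p" "nodes k p \<inter> Zs \<alpha> = {}" using I unfolding Inv_def by blast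
  have I3: "\<And>q. isp k q \<Longrightarrow> nodes k q \<inter> Zs \<alpha> = {} \<Longrightarrow> Os \<alpha> \<subseteq> nodes k q"
    using I unfolding Inv_def by blast
  have O: "Os \<alpha> \<subseteq> nodes k p" using I3 p by blast
  have I1: "\<forall>(f, v) \<in> set \<alpha>. v = 0 \<or> v = 1" using I unfolding Inv_def by blast
  have vals: "v = 0 \<or> v = 1" if "(f, v) \<in> set \<alpha>" for f v using I1 that by blast
  let ?b = "idx k (p k)"
  have pk: "1 \<le> p k \<and> p k \<le> k" using isp_bounds[OF p(1), of k] k by simp
  have bO: "?b \<notin> Os \<alpha>"
  proof
    assume b: "?b \<in> Os \<alpha>"
    have qk: "q k = p k" if q: "isp k q" "nodes k q \<inter> Zs \<alpha> = {}" for q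
    proof -
      have "Os \<alpha> \<subseteq> nodes k q" using I3 q by blast
      then have "?b \<in> nodes k q" using b by blast
      then have "p k = q k" using in_nodes_iff[OF q(1), of "p k" k] pk by simp
      then show ?thesis by simp
    qed
    have fin: "finite (Zs \<alpha>)" and cl: "card (Zs \<alpha>) \<le> length \<alpha>" using Zs_card by blast+
    have "k - 1 \<le> card (Zs \<alpha>)"
    proof (rule count_lemma)
      show "isp k p" by (rule p(1))
      show "1 \<le> k" using k by simp
      show "nodes k p \<inter> Zs \<alpha> = {}" by (rule p(2))
      show "finite (Zs \<alpha>)" by (rule fin)
      fix q assume a: "isp k q" "nodes k q \<inter> Zs \<alpha> = {}"
      show "q k = p k" by (rule qk[OF a])
    qed
    then show False using cl len by linarith
  qed
  have inrow: "row S \<in> trows (sub (Tk k) \<alpha>)" if S: "S \<subseteq> nodes k p" "Os \<alpha> \<subseteq> S" for S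
    unfolding sub_rows
  proof (intro CollectI conjI ballI)
    have "S \<subseteq> {1..m k}" using S(1) nodes_range[OF p(1)] by (rule order_trans)
    then show "row S \<in> trows (Tk k)" by (rule row_in_Tk)
    fix x assume x: "x \<in> set \<alpha>"
    obtain f v where fv: "x = (f, v)" by force
    have fva: "(f, v) \<in> set \<alpha>" using x fv by simp
    have "row S f = v"
    proof (cases "v = 0")
      case True
      then have "f \<in> Zs \<alpha>" using fva by (simp add: Zs_def)
      then have "f \<notin> S" using p(2) S(1) by blast
      then show ?thesis using True by (simp add: row_def)
    next
      case False
      then have "v = 1" using vals[OF fva] by simp
      then have "f \<in> Os \<alpha>" using fva by (simp add: Os_def)
      then have "f \<in> S" using S(2) by blast
      then show ?thesis using \<open>v = 1\<close> by (simp add: row_def)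
    qed
    then show "case x of (f, v) \<Rightarrow> row S f = v" using fv by simp
  qed
  show ?thesis
  proof (cases "d = ?b")
    case True
    have "nodes k p - {?b} \<subseteq> nodes k p" by blast
    moreover have "Os \<alpha> \<subseteq> nodes k p - {?b}" using O bO by blast
    ultimately have "row (nodes k p - {?b}) \<in> trows (sub (Tk k) \<alpha>)" by (rule inrow)
    moreover have "d \<notin> nu k (row (nodes k p - {?b}))" using nu_row_path_del[OF p(1) k] True by simp
    ultimately show ?thesis by blast
  next
    case False
    have "row (nodes k p) \<in> trows (sub (Tk k) \<alpha>)" using O by (intro inrow) simp_all
    moreover have "nu k (row (nodes k p)) \<subseteq> {?b}" using nu_row_path[OF p(1)] k by simp
    then have "d \<notin> nu k (row (nodes k p))" using False by blast
    ultimately show ?thesis by blast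
  qed
qed



lemma main:
  assumes "Inv k \<alpha>" "k \<ge> 1"
    "\<forall>r\<in>trows (sub (Tk k) \<alpha>). \<exists>(p, d)\<in>paths t. r \<in> trows (sub (Tk k) (\<alpha> @ p))"
    "\<forall>(p, d)\<in>paths t. trows (sub (Tk k) (\<alpha> @ p)) = {} \<or> d \<in> Pi_dec (sub (Tk k) (\<alpha> @ p))"
  shows "\<exists>(p, d)\<in>paths t. k - 1 \<le> length \<alpha> + length p"
  using assms
proof (induction t arbitrary: \<alpha>)
  case (Leaf d)
  show ?case
  proof (cases "k - 1 \<le> length \<alpha>")
    case True then show ?thesis by simp
  next
    case False
    then obtain r where r: "r \<in> trows (sub (Tk k) \<alpha>)" "d \<notin> nu k r"
      using Inv_leaf[OF Leaf.prems(1)] by fastforce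
    have "d \<in> Pi_dec (sub (Tk k) \<alpha>)" using Leaf.prems(4) r by auto
    then show ?thesis using r unfolding Pi_dec_def by (auto simp: sub_def Tk_def)
  qed
next
  case (Node f l rt)
  obtain v where v: "v = 0 \<or> v = 1" "Inv k (\<alpha> @ [(f, v)])" using Inv_step[OF Node.prems(1)] by blast
  let ?a = "\<alpha> @ [(f, v)]"
  obtain x where x: "x \<in> trows (sub (Tk k) ?a)" using Inv_rows[OF v(2) Node.prems(2)] by blast
  have xf: "x f = v" using x by (auto simp: sub_def)
  have cov: "\<forall>y\<in>trows (sub (Tk k) \<alpha>). \<exists>(p, d)\<in>paths (Node f l rt). y \<in> trows (sub (Tk k) (\<alpha> @ p))"
    using Node.prems(3) .
  have lc: "\<forall>(p, d)\<in>paths (Node f l rt). trows (sub (Tk k) (\<alpha> @ p)) = {} \<or> d \<in> Pi_dec (sub (Tk k) (\<alpha> @ p))"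
    using Node.prems(4) .
  show ?case
  proof (cases "v = 0")
    case True
    have "l \<noteq> None"
    proof
      assume "l = None"
      have "x \<in> trows (sub (Tk k) \<alpha>)" using x by (auto simp: sub_def)
      then obtain p d where "(p, d) \<in> paths (Node f l rt)" "x \<in> trows (sub (Tk k) (\<alpha> @ p))" using cov by blast
      then show False using \<open>l = None\<close> xf True by (auto simp: sub_def split: option.splits)
    qed
    then obtain t where t: "l = Some t" by auto
    have "\<exists>(p, d)\<in>paths t. k - 1 \<le> length ?a + length p"
    proof (rule Node.IH(1)[of t ?a])
      show "t \<in> set_option l" using t by simp
      show "Inv k ?a" by (rule v(2))
      show "1 \<le> k" by (rule Node.prems(2))
      show "\<forall>y\<in>trows (sub (Tk k) ?a). \<exists>(p, d)\<in>paths t. y \<in> trows (sub (Tk k) (?a @ p))"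
      proof
        fix y assume y: "y \<in> trows (sub (Tk k) ?a)"
        then have yf: "y f = 0" using True by (auto simp: sub_def)
        have "y \<in> trows (sub (Tk k) \<alpha>)" using y by (auto simp: sub_def)
        then obtain p d where pd: "(p, d) \<in> paths (Node f l rt)" "y \<in> trows (sub (Tk k) (\<alpha> @ p))" using cov by blast
        have "\<exists>p'. p = (f, 0) # p' \<and> (p', d) \<in> paths t"
          using pd yf t True by (auto simp: sub_def split: option.splits)
        then obtain p' where p': "p = (f, 0) # p'" "(p', d) \<in> paths t" by blast
        show "\<exists>(p, d)\<in>paths t. y \<in> trows (sub (Tk k) (?a @ p))"
          using pd p' True by (intro bexI[of _ "(p', d)"]) (auto simp: sub_def)
      qed
      show "\<forall>(p, d)\<in>paths t. trows (sub (Tk k) (?a @ p)) = {} \<or> d \<in> Pi_dec (sub (Tk k) (?a @ p))"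
      proof
        fix x assume x: "x \<in> paths t"
        obtain p d where pd: "x = (p, d)" by (cases x)
        have "((f, 0) # p, d) \<in> paths (Node f l rt)" using t x pd by auto
        then have "trows (sub (Tk k) (\<alpha> @ ((f, 0) # p))) = {} \<or> d \<in> Pi_dec (sub (Tk k) (\<alpha> @ ((f, 0) # p)))"
          using lc by blast
        then show "case x of (p, d) \<Rightarrow> trows (sub (Tk k) (?a @ p)) = {} \<or> d \<in> Pi_dec (sub (Tk k) (?a @ p))"
          using pd True by simp
      qed
    qed
    then obtain p d where "(p, d) \<in> paths t" "k - 1 \<le> length ?a + length p" by blast
    moreover then have "((f, 0) # p, d) \<in> paths (Node f l rt)" using t by auto
    ultimately show ?thesis by (intro bexI[of _ "((f, 0) # p, d)"]) auto
  next
    case False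
    then have v1: "v = 1" using v by auto
    have "rt \<noteq> None"
    proof
      assume "rt = None"
      have "x \<in> trows (sub (Tk k) \<alpha>)" using x by (auto simp: sub_def)
      then obtain p d where "(p, d) \<in> paths (Node f l rt)" "x \<in> trows (sub (Tk k) (\<alpha> @ p))" using cov by blast
      then show False using \<open>rt = None\<close> xf v1 by (auto simp: sub_def split: option.splits)
    qed
    then obtain t where t: "rt = Some t" by auto
    have "\<exists>(p, d)\<in>paths t. k - 1 \<le> length ?a + length p"
    proof (rule Node.IH(2)[of t ?a])
      show "t \<in> set_option rt" using t by simp
      show "Inv k ?a" by (rule v(2))
      show "1 \<le> k" by (rule Node.prems(2))
      show "\<forall>y\<in>trows (sub (Tk k) ?a). \<exists>(p, d)\<in>paths t. y \<in> trows (sub (Tk k) (?a @ p))"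
      proof
        fix y assume y: "y \<in> trows (sub (Tk k) ?a)"
        then have yf: "y f = 1" using v1 by (auto simp: sub_def)
        have "y \<in> trows (sub (Tk k) \<alpha>)" using y by (auto simp: sub_def)
        then obtain p d where pd: "(p, d) \<in> paths (Node f l rt)" "y \<in> trows (sub (Tk k) (\<alpha> @ p))" using cov by blast
        have "\<exists>p'. p = (f, 1) # p' \<and> (p', d) \<in> paths t"
          using pd yf t v1 by (auto simp: sub_def split: option.splits)
        then obtain p' where p': "p = (f, 1) # p'" "(p', d) \<in> paths t" by blast
        show "\<exists>(p, d)\<in>paths t. y \<in> trows (sub (Tk k) (?a @ p))"
          using pd p' v1 by (intro bexI[of _ "(p', d)"]) (auto simp: sub_def)
      qed
      show "\<forall>(p, d)\<in>paths t. trows (sub (Tk k) (?a @ p)) = {} \<or> d \<in> Pi_dec (sub (Tk k) (?a @ p))"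
      proof
        fix x assume x: "x \<in> paths t"
        obtain p d where pd: "x = (p, d)" by (cases x)
        have "((f, 1) # p, d) \<in> paths (Node f l rt)" using t x pd by auto
        then have "trows (sub (Tk k) (\<alpha> @ ((f, 1) # p))) = {} \<or> d \<in> Pi_dec (sub (Tk k) (\<alpha> @ ((f, 1) # p)))"
          using lc by blast
        then show "case x of (p, d) \<Rightarrow> trows (sub (Tk k) (?a @ p)) = {} \<or> d \<in> Pi_dec (sub (Tk k) (?a @ p))"
          using pd v1 by simp
      qed
    qed
    then obtain p d where "(p, d) \<in> paths t" "k - 1 \<le> length ?a + length p" by blast
    moreover then have "((f, 1) # p, d) \<in> paths (Node f l rt)" using t by auto
    ultimately show ?thesis by (intro bexI[of _ "((f, 1) # p, d)"]) auto
  qed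
qed



lemma Tk_simps: "tatt (Tk k) = {1..m k}" "tdec (Tk k) = nu k"
  "trows (Tk k) = {r. (\<forall>i \<in> {1..m k}. r i \<in> {0, 1}) \<and> (\<forall>i. i \<notin> {1..m k} \<longrightarrow> r i = 0)}"
  by (simp_all add: Tk_def)

lemma nu_nonempty:
  assumes r: "r \<in> trows (Tk k)" and k: "k \<ge> 1"
  shows "nu k r \<noteq> {}"
proof (cases "r 1 = 0")
  case True
  then have "0 \<in> nu k r" by (simp add: nu_def)
  then show ?thesis by blast
next
  case False
  have rv: "r i = 0 \<or> r i = 1" if "i \<in> {1..m k}" for i using r that by (auto simp: Tk_simps)
  have i11: "idx 1 1 = 1" by (simp add: idx_def)
  define L where "L = {s. 1 \<le> s \<and> s \<le> k \<and> (\<exists>j. 1 \<le> j \<and> j \<le> s \<and> r (idx s j) = 1)}"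
  have "1 \<in> {1..m k}" using idx_range[of 1 1 k] k i11 by simp
  then have "r 1 = 1" using rv[OF \<open>1 \<in> {1..m k}\<close>] False by simp
  then have "1 \<in> L" using k i11 unfolding L_def by auto
  have finL: "finite L" unfolding L_def by auto
  define s0 where "s0 = Max L"
  have s0L: "s0 \<in> L" using finL \<open>1 \<in> L\<close> unfolding s0_def by (intro Max_in) auto
  have s0max: "s \<le> s0" if "s \<in> L" for s using finL that unfolding s0_def by simp
  obtain j where j: "1 \<le> s0" "s0 \<le> k" "1 \<le> j" "j \<le> s0" "r (idx s0 j) = 1" using s0L unfolding L_def by blast
  show ?thesis
  proof (cases "s0 = k")
    case True
    then have "idx k j \<in> nu k r" using j unfolding nu_def by blast
    then show ?thesis by blast
  next
    case False
    have c1: "r (idx (s0 + 1) j) = 0"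
    proof (rule ccontr)
      assume a: "r (idx (s0 + 1) j) \<noteq> 0"
      have "idx (s0 + 1) j \<in> {1..m k}" using idx_range[of j "s0+1" k] j False by auto
      then have "r (idx (s0 + 1) j) = 0 \<or> r (idx (s0 + 1) j) = 1" by (rule rv)
      then have "r (idx (s0 + 1) j) = 1" using a by simp
      then have "s0 + 1 \<in> L" using j False unfolding L_def by auto
      then show False using s0max by fastforce
    qed
    have c2: "r (idx (s0 + 1) (j + 1)) = 0"
    proof (rule ccontr)
      assume a: "r (idx (s0 + 1) (j + 1)) \<noteq> 0"
      have "idx (s0 + 1) (j + 1) \<in> {1..m k}" using idx_range[of "j+1" "s0+1" k] j False by auto
      then have "r (idx (s0 + 1) (j + 1)) = 0 \<or> r (idx (s0 + 1) (j + 1)) = 1" by (rule rv)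
      then have "r (idx (s0 + 1) (j + 1)) = 1" using a by simp
      then have "s0 + 1 \<in> L" using j False unfolding L_def by (intro CollectI conjI exI[of _ "j+1"]) auto
      then show False using s0max by fastforce
    qed
    have "s0 < k" using j False by simp
    then have "idx s0 j \<in> nu k r" using j c1 c2 unfolding nu_def by blast
    then show ?thesis by blast
  qed
qed

fun build :: "nat \<Rightarrow> (nat \<times> nat) list \<Rightarrow> nat list \<Rightarrow> dtree" where
  "build k \<alpha> [] = Leaf (SOME d. d \<in> Pi_dec (sub (Tk k) \<alpha>))"
| "build k \<alpha> (f # fs) = Node f (Some (build k (\<alpha> @ [(f, 0)]) fs)) (Some (build k (\<alpha> @ [(f, 1)]) fs))"

lemma build_wf: "wf_tree (build k \<alpha> L)"
  by (induction L arbitrary: \<alpha>) auto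

lemma build_atts: "tree_atts (build k \<alpha> L) \<subseteq> set L"
  by (induction L arbitrary: \<alpha>) auto

lemma build_cover:
  "r \<in> trows (sub (Tk k) \<alpha>) \<Longrightarrow> set L \<subseteq> {1..m k} \<Longrightarrow>
   \<exists>(p, d)\<in>paths (build k \<alpha> L). r \<in> trows (sub (Tk k) (\<alpha> @ p))"
proof (induction L arbitrary: \<alpha>)
  case Nil then show ?case by simp
next
  case (Cons f L)
  have rT: "r \<in> trows (Tk k)" using Cons.prems by (simp add: sub_def)
  have "r f \<in> {0, 1}" using rT Cons.prems(2) by (auto simp: Tk_simps)
  then obtain v where v: "v = 0 \<or> v = 1" "r f = v" by blast
  have "r \<in> trows (sub (Tk k) (\<alpha> @ [(f, v)]))" using Cons.prems(1) v by (auto simp: sub_def)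
  then obtain p d where pd: "(p, d) \<in> paths (build k (\<alpha> @ [(f, v)]) L)"
    "r \<in> trows (sub (Tk k) ((\<alpha> @ [(f, v)]) @ p))" using Cons.IH Cons.prems(2) by fastforce
  have "((f, v) # p, d) \<in> paths (build k \<alpha> (f # L))" using pd(1) v by auto
  moreover have "r \<in> trows (sub (Tk k) (\<alpha> @ ((f, v) # p)))" using pd(2) by simp
  ultimately show ?case by (intro bexI[of _ "((f, v) # p, d)"]) auto
qed

lemma leaf_ok:
  assumes "{1..m k} \<subseteq> fst ` set \<alpha>" "k \<ge> 1" "trows (sub (Tk k) \<alpha>) \<noteq> {}"
  shows "Pi_dec (sub (Tk k) \<alpha>) \<noteq> {}"
proof -
  obtain r where r: "r \<in> trows (sub (Tk k) \<alpha>)" using assms(3) by blast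
  have eq: "r' = r" if r': "r' \<in> trows (sub (Tk k) \<alpha>)" for r'
  proof
    fix i
    show "r' i = r i"
    proof (cases "i \<in> {1..m k}")
      case True
      then obtain v where "(i, v) \<in> set \<alpha>" using assms(1) by force
      then show ?thesis using r r' by (auto simp: sub_def)
    next
      case False
      then show ?thesis using r r' by (auto simp: sub_def Tk_simps)
    qed
  qed
  have "trows (sub (Tk k) \<alpha>) = {r}" using r eq by blast
  moreover have "tdec (sub (Tk k) \<alpha>) = nu k" by (simp add: sub_def Tk_simps)
  moreover have "nu k r \<noteq> {}" using nu_nonempty r assms(2) by (simp add: sub_def)
  ultimately show ?thesis by (simp add: Pi_dec_def)
qed

lemma build_leaf:
  "{1..m k} \<subseteq> set L \<union> fst ` set \<alpha> \<Longrightarrow> k \<ge> 1 \<Longrightarrow>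
   \<forall>(p, d)\<in>paths (build k \<alpha> L). trows (sub (Tk k) (\<alpha> @ p)) = {} \<or> d \<in> Pi_dec (sub (Tk k) (\<alpha> @ p))"
proof (induction L arbitrary: \<alpha>)
  case Nil
  show ?case
  proof (cases "trows (sub (Tk k) \<alpha>) = {}")
    case False
    then have "Pi_dec (sub (Tk k) \<alpha>) \<noteq> {}" using leaf_ok Nil.prems by simp
    then have "(SOME d. d \<in> Pi_dec (sub (Tk k) \<alpha>)) \<in> Pi_dec (sub (Tk k) \<alpha>)" by (simp add: some_in_eq)
    then show ?thesis by simp
  qed simp
next
  case (Cons f L)
  have h0: "{1..m k} \<subseteq> set L \<union> fst ` set (\<alpha> @ [(f, v)])" for v using Cons.prems(1) by auto
  show ?case
  proof (intro ballI)
    fix x assume x: "x \<in> paths (build k \<alpha> (f # L))"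
    then obtain v p d where xe: "x = ((f, v) # p, d)" "(p, d) \<in> paths (build k (\<alpha> @ [(f, v)]) L)" by auto
    have "trows (sub (Tk k) ((\<alpha> @ [(f, v)]) @ p)) = {} \<or> d \<in> Pi_dec (sub (Tk k) ((\<alpha> @ [(f, v)]) @ p))"
      using Cons.IH[OF h0 Cons.prems(2)] xe(2) by blast
    then show "case x of (p, d) \<Rightarrow> trows (sub (Tk k) (\<alpha> @ p)) = {} \<or> d \<in> Pi_dec (sub (Tk k) (\<alpha> @ p))"
      using xe(1) by simp
  qed
qed

lemma paths_finite: "finite (paths t)"
  by (induction t) (auto split: option.splits)

lemma det_exists: "k \<ge> 1 \<Longrightarrow> det_tree (Tk k) (build k [] [1..<m k + 1])"
  unfolding det_tree_def
proof (intro conjI)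
  assume k: "k \<ge> 1"
  show "wf_tree (build k [] [1..<m k + 1])" by (rule build_wf)
  show "tree_atts (build k [] [1..<m k + 1]) \<subseteq> tatt (Tk k)"
    using build_atts[of k "[]" "[1..<m k + 1]"] by (auto simp: Tk_simps)
  show "\<forall>r\<in>trows (Tk k). \<exists>(p, d)\<in>paths (build k [] [1..<m k + 1]). r \<in> trows (sub (Tk k) p)"
  proof
    fix r assume "r \<in> trows (Tk k)"
    then have "r \<in> trows (sub (Tk k) [])" by (simp add: sub_def)
    moreover have "set [1..<m k + 1] \<subseteq> {1..m k}" by auto
    ultimately have "\<exists>(p, d)\<in>paths (build k [] [1..<m k + 1]). r \<in> trows (sub (Tk k) ([] @ p))"
      by (rule build_cover)
    then show "\<exists>(p, d)\<in>paths (build k [] [1..<m k + 1]). r \<in> trows (sub (Tk k) p)"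
      by (simp only: append_Nil)
  qed
  show "\<forall>(p, d)\<in>paths (build k [] [1..<m k + 1]). trows (sub (Tk k) p) = {} \<or> d \<in> Pi_dec (sub (Tk k) p)"
  proof -
    have "{1..m k} \<subseteq> set [1..<m k + 1] \<union> fst ` set ([] :: (nat \<times> nat) list)" by auto
    from build_leaf[OF this k] show ?thesis by (simp only: append_Nil)
  qed
qed

theorem lemma9:
  fixes k :: nat
  assumes "k \<ge> 1"
  shows "h_det (Tk k) \<ge> k - 1"
proof -
  have ex: "\<exists>n \<Gamma>. det_tree (Tk k) \<Gamma> \<and> depth \<Gamma> = n" using det_exists[OF assms] by blast
  obtain \<Gamma> where G: "det_tree (Tk k) \<Gamma>" "depth \<Gamma> = h_det (Tk k)"
    using LeastI_ex[OF ex] unfolding h_det_def by blast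
  have inv: "Inv k []"
    unfolding Inv_def Zs_def Os_def isp_def by auto
  have "\<exists>(p, d)\<in>paths \<Gamma>. k - 1 \<le> length ([] :: (nat \<times> nat) list) + length p"
  proof (rule main[OF inv assms])
    show "\<forall>r\<in>trows (sub (Tk k) []). \<exists>(p, d)\<in>paths \<Gamma>. r \<in> trows (sub (Tk k) ([] @ p))"
      using G(1) unfolding det_tree_def by (simp add: sub_def)
    show "\<forall>(p, d)\<in>paths \<Gamma>. trows (sub (Tk k) ([] @ p)) = {} \<or> d \<in> Pi_dec (sub (Tk k) ([] @ p))"
      using G(1) unfolding det_tree_def by simp
  qed
  then obtain p d where pd: "(p, d) \<in> paths \<Gamma>" "k - 1 \<le> length p" by auto
  have "length p \<le> depth \<Gamma>" unfolding depth_def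
    using pd(1) paths_finite[of \<Gamma>] by (intro Max_ge) force+
  then show ?thesis using G(2) pd(2) by simp
qed


end
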